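(* Let $R$ be an associative ring with unity and let $\mathbf{K}=(K,\leq_p)$ be an AEC with $K$ a class of left $R$-modules closed under direct sums, pure submodules and pure epimorphic images. If $M_1,M_2,N\in K$ with $M_1,M_2\leq_p N$, then there are $M_1',M_0\in K$ such that $M_0\leq_p M_1'\leq_p N$, $M_0\leq_p M_2$, $M_1\leq_p M_1'$, $\|M_0\|\leq\|M_1\|+|R|+\aleph_0$, and $M_1'\mathop{\perp}^{N}_{M_0}M_2$.
   Context: $\leq_p$ is the pure submodule relation; a pure epimorphism is a surjective homomorphism with pure kernel. An AEC $(K,\leq_p)$: closed under isomorphism and unions of $\leq_p$-chains, with a Löwenheim–Skolem number. For $M_0,M_1',M_2,N\in K$ with $M_0\leq_p M_1',M_2\leq_p N$, write $M_1'\mathop{\perp}^N_{M_0}M_2$ if the homomorphism $t:(M_1'\oplus M_2)/\{(m,-m):m\in M_0\}\to N$, $t([(a,b)])=a+b$ (the canonical map from the pushout in $R$-Mod of the inclusions $M_0\hookrightarrow M_1'$, $M_0\hookrightarrow M_2$ to $N$), is a pure embedding (injective with pure image). *)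

theory Defs
  imports "HOL-Algebra.Module" "HOL-Algebra.Ring"
begin

text \<open>HOL-Algebra's locale module requires a commutative ring, so we define left modules here,
  with exactly the axioms of HOL-Algebra's module but with ring R instead of cring R.\<close>

definition left_module :: "('r, 'm) ring_scheme \<Rightarrow> ('r, 'a) module \<Rightarrow> bool" where
  "left_module R M \<longleftrightarrow> ring R \<and> abelian_group M \<and>
     (\<forall>a\<in>carrier R. \<forall>x\<in>carrier M. a \<odot>\<^bsub>M\<^esub> x \<in> carrier M) \<and>
     (\<forall>a\<in>carrier R. \<forall>b\<in>carrier R. \<forall>x\<in>carrier M.
        (a \<oplus>\<^bsub>R\<^esub> b) \<odot>\<^bsub>M\<^esub> x = a \<odot>\<^bsub>M\<^esub> x \<oplus>\<^bsub>M\<^esub> b \<odot>\<^bsub>M\<^esub> x) \<and>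
     (\<forall>a\<in>carrier R. \<forall>x\<in>carrier M. \<forall>y\<in>carrier M.
        a \<odot>\<^bsub>M\<^esub> (x \<oplus>\<^bsub>M\<^esub> y) = a \<odot>\<^bsub>M\<^esub> x \<oplus>\<^bsub>M\<^esub> a \<odot>\<^bsub>M\<^esub> y) \<and>
     (\<forall>a\<in>carrier R. \<forall>b\<in>carrier R. \<forall>x\<in>carrier M.
        (a \<otimes>\<^bsub>R\<^esub> b) \<odot>\<^bsub>M\<^esub> x = a \<odot>\<^bsub>M\<^esub> (b \<odot>\<^bsub>M\<^esub> x)) \<and>
     (\<forall>x\<in>carrier M. \<one>\<^bsub>R\<^esub> \<odot>\<^bsub>M\<^esub> x = x)"

definition mod_hom :: "('r, 'm) ring_scheme \<Rightarrow> ('r, 'a) module \<Rightarrow> ('r, 'b) module \<Rightarrow> ('a \<Rightarrow> 'b) \<Rightarrow> bool" where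
  "mod_hom R M M' f \<longleftrightarrow> left_module R M \<and> left_module R M' \<and>
     (\<forall>x\<in>carrier M. f x \<in> carrier M') \<and>
     (\<forall>x\<in>carrier M. \<forall>y\<in>carrier M. f (x \<oplus>\<^bsub>M\<^esub> y) = f x \<oplus>\<^bsub>M'\<^esub> f y) \<and>
     (\<forall>a\<in>carrier R. \<forall>x\<in>carrier M. f (a \<odot>\<^bsub>M\<^esub> x) = a \<odot>\<^bsub>M'\<^esub> f x)"

definition mod_iso :: "('r, 'm) ring_scheme \<Rightarrow> ('r, 'a) module \<Rightarrow> ('r, 'b) module \<Rightarrow> bool" where
  "mod_iso R M M' \<longleftrightarrow> (\<exists>f. mod_hom R M M' f \<and> bij_betw f (carrier M) (carrier M'))"

definition submod :: "('r, 'm) ring_scheme \<Rightarrow> ('r, 'a) module \<Rightarrow> 'a set \<Rightarrow> bool" where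
  "submod R N S \<longleftrightarrow> S \<subseteq> carrier N \<and> \<zero>\<^bsub>N\<^esub> \<in> S \<and>
     (\<forall>x\<in>S. \<forall>y\<in>S. x \<oplus>\<^bsub>N\<^esub> y \<in> S) \<and> (\<forall>x\<in>S. \<ominus>\<^bsub>N\<^esub> x \<in> S) \<and>
     (\<forall>a\<in>carrier R. \<forall>x\<in>S. a \<odot>\<^bsub>N\<^esub> x \<in> S)"

definition pure_submod :: "('r, 'm) ring_scheme \<Rightarrow> ('r, 'a) module \<Rightarrow> 'a set \<Rightarrow> bool" where
  "pure_submod R N S \<longleftrightarrow> submod R N S \<and>
     (\<forall>(m::nat) (n::nat) (r::nat \<Rightarrow> nat \<Rightarrow> 'r) (c::nat \<Rightarrow> 'a).
        (\<forall>i<m. \<forall>j<n. r i j \<in> carrier R) \<longrightarrow> (\<forall>i<m. c i \<in> S) \<longrightarrow>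
        (\<exists>x. (\<forall>j<n. x j \<in> carrier N) \<and>
              (\<forall>i<m. finsum N (\<lambda>j. r i j \<odot>\<^bsub>N\<^esub> x j) {..<n} = c i)) \<longrightarrow>
        (\<exists>y. (\<forall>j<n. y j \<in> S) \<and>
              (\<forall>i<m. finsum N (\<lambda>j. r i j \<odot>\<^bsub>N\<^esub> y j) {..<n} = c i)))"

definition pure_le :: "('r, 'm) ring_scheme \<Rightarrow> ('r, 'a) module \<Rightarrow> ('r, 'a) module \<Rightarrow> bool" where
  "pure_le R M N \<longleftrightarrow> left_module R M \<and> left_module R N \<and>
     carrier M \<subseteq> carrier N \<and> \<zero>\<^bsub>M\<^esub> = \<zero>\<^bsub>N\<^esub> \<and>
     (\<forall>x\<in>carrier M. \<forall>y\<in>carrier M. x \<oplus>\<^bsub>M\<^esub> y = x \<oplus>\<^bsub>N\<^esub> y) \<and>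
     (\<forall>a\<in>carrier R. \<forall>x\<in>carrier M. a \<odot>\<^bsub>M\<^esub> x = a \<odot>\<^bsub>N\<^esub> x) \<and>
     pure_submod R N (carrier M)"

definition pure_epi :: "('r, 'm) ring_scheme \<Rightarrow> ('r, 'a) module \<Rightarrow> ('r, 'b) module \<Rightarrow> ('a \<Rightarrow> 'b) \<Rightarrow> bool" where
  "pure_epi R M M' f \<longleftrightarrow> mod_hom R M M' f \<and> f ` carrier M = carrier M' \<and>
     pure_submod R M {x\<in>carrier M. f x = \<zero>\<^bsub>M'\<^esub>}"

text \<open>Direct sums: D is (isomorphic to) the direct sum of the family (M i) over I,
  i.e. there is an R-linear bijection from the finitely supported families onto D.\<close>

definition dsum_carrier :: "'i set \<Rightarrow> ('i \<Rightarrow> ('r, 'a) module) \<Rightarrow> ('i \<Rightarrow> 'a) set" where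
  "dsum_carrier I M = {x \<in> PiE I (\<lambda>i. carrier (M i)). finite {i\<in>I. x i \<noteq> \<zero>\<^bsub>M i\<^esub>}}"

definition is_direct_sum :: "('r, 'm) ring_scheme \<Rightarrow> 'i set \<Rightarrow> ('i \<Rightarrow> ('r, 'a) module) \<Rightarrow> ('r, 'a) module \<Rightarrow> bool" where
  "is_direct_sum R I M D \<longleftrightarrow> (\<forall>i\<in>I. left_module R (M i)) \<and> left_module R D \<and>
     (\<exists>\<phi>. bij_betw \<phi> (dsum_carrier I M) (carrier D) \<and>
        (\<forall>x\<in>dsum_carrier I M. \<forall>y\<in>dsum_carrier I M.
           \<phi> (\<lambda>i\<in>I. x i \<oplus>\<^bsub>M i\<^esub> y i) = \<phi> x \<oplus>\<^bsub>D\<^esub> \<phi> y) \<and>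
        (\<forall>a\<in>carrier R. \<forall>x\<in>dsum_carrier I M.
           \<phi> (\<lambda>i\<in>I. a \<odot>\<^bsub>M i\<^esub> x i) = a \<odot>\<^bsub>D\<^esub> \<phi> x))"

definition AEC_pure :: "('r, 'm) ring_scheme \<Rightarrow> (('r, 'a) module \<Rightarrow> bool) \<Rightarrow> bool" where
  "AEC_pure R K \<longleftrightarrow>
     (\<forall>M. K M \<longrightarrow> left_module R M) \<and>
     \<comment> \<open>closed under isomorphism\<close>
     (\<forall>M M'. K M \<and> mod_iso R M M' \<longrightarrow> K M') \<and>
     \<comment> \<open>closed under unions of nonempty \<le>p-chains (Tarski-Vaught chain axioms)\<close>
     (\<forall>C U. C \<noteq> {} \<and> (\<forall>M\<in>C. K M) \<and> (\<forall>M\<in>C. \<forall>M'\<in>C. pure_le R M M' \<or> pure_le R M' M) \<and>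
            left_module R U \<and> carrier U = (\<Union>M\<in>C. carrier M) \<and> (\<forall>M\<in>C. pure_le R M U)
        \<longrightarrow> K U \<and> (\<forall>N. K N \<and> (\<forall>M\<in>C. pure_le R M N) \<longrightarrow> pure_le R U N)) \<and>
     \<comment> \<open>Loewenheim-Skolem number\<close>
     (\<exists>L::'a set. \<forall>N A. K N \<and> A \<subseteq> carrier N \<longrightarrow>
        (\<exists>M. K M \<and> pure_le R M N \<and> A \<subseteq> carrier M \<and>
             (card_of (carrier M), card_of (A <+> L <+> carrier R <+> (UNIV::nat set))) \<in> ordLeq))"

text \<open>Pushout of M0 \<hookrightarrow> M1', M0 \<hookrightarrow> M2 in R-Mod:
  (M1' \<oplus> M2) / {(m, -m) : m \<in> M0}, realised as equivalence classes of pairs.\<close>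

definition pushout_rel :: "('r, 'a) module \<Rightarrow> ('r, 'a) module \<Rightarrow> ('r, 'a) module \<Rightarrow> (('a \<times> 'a) \<times> ('a \<times> 'a)) set" where
  "pushout_rel M0 M1 M2 = {((a, b), (a', b')).
     a \<in> carrier M1 \<and> b \<in> carrier M2 \<and> a' \<in> carrier M1 \<and> b' \<in> carrier M2 \<and>
     (\<exists>m\<in>carrier M0. a \<ominus>\<^bsub>M1\<^esub> a' = m \<and> b \<ominus>\<^bsub>M2\<^esub> b' = \<ominus>\<^bsub>M2\<^esub> m)}"

definition pushout_carrier :: "('r, 'a) module \<Rightarrow> ('r, 'a) module \<Rightarrow> ('r, 'a) module \<Rightarrow> ('a \<times> 'a) set set" where
  "pushout_carrier M0 M1 M2 = (carrier M1 \<times> carrier M2) // pushout_rel M0 M1 M2"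

text \<open>The canonical map t([(a,b)]) = a + b into N.\<close>

definition pushout_map :: "('r, 'a) module \<Rightarrow> ('a \<times> 'a) set \<Rightarrow> 'a" where
  "pushout_map N X = the_elem ((\<lambda>(a, b). a \<oplus>\<^bsub>N\<^esub> b) ` X)"

text \<open>M1' \<perp>^N_{M0} M2: t is a pure embedding (injective with pure image).\<close>

definition indep :: "('r, 'm) ring_scheme \<Rightarrow> ('r, 'a) module \<Rightarrow> ('r, 'a) module \<Rightarrow> ('r, 'a) module \<Rightarrow> ('r, 'a) module \<Rightarrow> bool" where
  "indep R M0 M1 M2 N \<longleftrightarrow>
     inj_on (pushout_map N) (pushout_carrier M0 M1 M2) \<and>
     pure_submod R N (pushout_map N ` pushout_carrier M0 M1 M2)"

end

theory Submission
  imports Defs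
begin

unbundle cardinal_syntax

lemma fin_le_inf: "finite A \<Longrightarrow> infinite B \<Longrightarrow> |A| \<le>o |B|"
  by (rule ordLess_imp_ordLeq, rule finite_ordLess_infinite[OF card_of_Well_order card_of_Well_order])
     (auto simp: Field_card_of)

lemma nat_le_inf: "infinite B \<Longrightarrow> |UNIV::nat set| \<le>o |B|"
  using infinite_iff_card_of_nat by blast

lemma lists_len_le:
  assumes B: "infinite B" and A: "|A| \<le>o |B|"
  shows "|{xs\<in>lists A. length xs = k}| \<le>o |B|"
proof (induction k)
  case 0
  have "{xs\<in>lists A. length xs = 0} = {[]}" by auto
  then show ?case by (simp only:) (rule fin_le_inf[OF _ B], simp)
next
  case (Suc k)
  have "{xs\<in>lists A. length xs = Suc k} = (\<lambda>(a,xs). a#xs) ` (A \<times> {xs\<in>lists A. length xs = k})"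
    by (auto simp: length_Suc_conv image_iff)
  moreover have "|A \<times> {xs\<in>lists A. length xs = k}| \<le>o |B|"
    by (rule card_of_Sigma_ordLeq_infinite[OF B A]) (use Suc in blast)
  ultimately show ?case using card_of_image ordLeq_transitive by simp blast
qed

lemma lists_le:
  assumes B: "infinite B" and A: "|A| \<le>o |B|"
  shows "|lists A| \<le>o |B|"
proof -
  have "lists A = (\<Union>k\<in>UNIV. {xs\<in>lists A. length xs = k})" by auto
  moreover have "|\<Union>k\<in>UNIV. {xs\<in>lists A. length xs = k}| \<le>o |B|"
    by (rule card_of_UNION_ordLeq_infinite[OF B nat_le_inf[OF B]]) (use lists_len_le[OF B A] in blast)
  ultimately show ?thesis by simp
qed

locale lm =
  fixes R :: "('r, 'm) ring_scheme" and N :: "('r, 'a) module" (structure)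
  assumes lmod: "left_module R N"
begin

sublocale abelian_group N
  using lmod unfolding left_module_def by blast

lemma sm_closed [simp, intro]: "a \<in> carrier R \<Longrightarrow> x \<in> carrier N \<Longrightarrow> a \<odot> x \<in> carrier N"
  using lmod unfolding left_module_def by blast

lemma sm_rdistr: "a \<in> carrier R \<Longrightarrow> x \<in> carrier N \<Longrightarrow> y \<in> carrier N \<Longrightarrow> a \<odot> (x \<oplus> y) = a \<odot> x \<oplus> a \<odot> y"
  using lmod unfolding left_module_def by blast

lemma sm_zero [simp]: "a \<in> carrier R \<Longrightarrow> a \<odot> \<zero> = \<zero>"
proof -
  assume a: "a \<in> carrier R"
  have "a \<odot> \<zero> = a \<odot> (\<zero> \<oplus> \<zero>)" by simp
  also have "\<dots> = a \<odot> \<zero> \<oplus> a \<odot> \<zero>" by (rule sm_rdistr[OF a zero_closed zero_closed])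
  finally have "a \<odot> \<zero> = a \<odot> \<zero> \<oplus> a \<odot> \<zero>" .
  then show ?thesis using add.l_cancel_one'[of "a \<odot> \<zero>" "a \<odot> \<zero>"] a by simp
qed

lemma sm_neg: "a \<in> carrier R \<Longrightarrow> x \<in> carrier N \<Longrightarrow> a \<odot> (\<ominus> x) = \<ominus> (a \<odot> x)"
proof -
  assume a: "a \<in> carrier R" and x: "x \<in> carrier N"
  have "a \<odot> (\<ominus> x) \<oplus> a \<odot> x = a \<odot> (\<ominus> x \<oplus> x)" using sm_rdistr a x by simp
  also have "\<dots> = \<zero>" using a x by (simp add: l_neg)
  finally show ?thesis using a x minus_equality by simp
qed

definition lf :: "(nat \<Rightarrow> nat \<Rightarrow> 'r) \<Rightarrow> (nat \<Rightarrow> 'a) \<Rightarrow> nat \<Rightarrow> nat \<Rightarrow> 'a" where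
  "lf r x i n = finsum N (\<lambda>j. r i j \<odot> x j) {..<n}"

lemma lf_closed [simp, intro]:
  "(\<forall>j<n. r i j \<in> carrier R) \<Longrightarrow> (\<forall>j<n. x j \<in> carrier N) \<Longrightarrow> lf r x i n \<in> carrier N"
  unfolding lf_def by (rule finsum_closed) auto

lemma lf_add:
  "(\<forall>j<n. r i j \<in> carrier R) \<Longrightarrow> (\<forall>j<n. x j \<in> carrier N) \<Longrightarrow> (\<forall>j<n. y j \<in> carrier N) \<Longrightarrow>
   lf r (\<lambda>j. x j \<oplus> y j) i n = lf r x i n \<oplus> lf r y i n"
  unfolding lf_def
  apply (subst finsum_addf[symmetric])
    apply auto[2]
  apply (rule finsum_cong')
    apply (auto simp: sm_rdistr)
  done

lemma lf_neg:
  "(\<forall>j<n. r i j \<in> carrier R) \<Longrightarrow> (\<forall>j<n. x j \<in> carrier N) \<Longrightarrow>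
   lf r (\<lambda>j. \<ominus> x j) i n = \<ominus> lf r x i n"
proof -
  assume r: "\<forall>j<n. r i j \<in> carrier R" and x: "\<forall>j<n. x j \<in> carrier N"
  have "lf r (\<lambda>j. \<ominus> x j) i n \<oplus> lf r x i n = lf r (\<lambda>j. \<ominus> x j \<oplus> x j) i n"
    using lf_add[of n r i "\<lambda>j. \<ominus> x j" x] r x by simp
  also have "\<dots> = finsum N (\<lambda>j. \<zero>) {..<n}" unfolding lf_def
    by (rule finsum_cong') (use r x in \<open>auto simp: l_neg\<close>)
  also have "\<dots> = \<zero>" by (simp add: finsum_zero)
  finally show ?thesis using minus_equality r x by simp
qed

lemma lf_minus:
  "(\<forall>j<n. r i j \<in> carrier R) \<Longrightarrow> (\<forall>j<n. x j \<in> carrier N) \<Longrightarrow> (\<forall>j<n. y j \<in> carrier N) \<Longrightarrow>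
   lf r (\<lambda>j. x j \<ominus> y j) i n = lf r x i n \<ominus> lf r y i n"
  unfolding a_minus_def using lf_add[of n r i x "\<lambda>j. \<ominus> y j"] lf_neg[of n r i y] by simp

lemma lf_cong:
  "(\<forall>j<n. r i j = r' i j) \<Longrightarrow> (\<forall>j<n. r i j \<in> carrier R) \<Longrightarrow> (\<forall>j<n. x j \<in> carrier N) \<Longrightarrow>
   lf r x i n = lf r' x i n"
  unfolding lf_def by (rule finsum_cong') auto

end

locale clos = lm R N for R :: "('r, 'm) ring_scheme" and N :: "('r, 'a) module" (structure) +
  fixes Ps :: "('a set \<times> ('a \<Rightarrow> 'a \<Rightarrow> bool)) set"
  assumes Ps_fin: "finite Ps" and Ps_sub: "\<And>p. p \<in> Ps \<Longrightarrow> fst p \<subseteq> carrier N"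
begin

definition solx :: "'a set \<Rightarrow> ('a \<Rightarrow> 'a \<Rightarrow> bool) \<Rightarrow> nat \<Rightarrow> nat \<Rightarrow> (nat \<Rightarrow> nat \<Rightarrow> 'r) \<Rightarrow> (nat \<Rightarrow> 'a) \<Rightarrow> (nat \<Rightarrow> 'a) \<Rightarrow> bool" where
  "solx P rel m n r c x \<longleftrightarrow> (\<forall>j<n. x j \<in> P) \<and> (\<forall>i<m. rel (lf r x i n) (c i))"

definition wit where
  "wit P rel m n r c = (if \<exists>x. solx P rel m n r c x then (SOME x. solx P rel m n r c x) ` {..<n} else {})"

definition dr :: "nat \<Rightarrow> 'r list \<Rightarrow> nat \<Rightarrow> nat \<Rightarrow> 'r" where "dr n rl = (\<lambda>i j. rl ! (i*n+j))"
definition dc :: "'a list \<Rightarrow> nat \<Rightarrow> 'a" where "dc cl = (\<lambda>i. cl ! i)"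

definition step :: "'a set \<Rightarrow> 'a set" where
  "step S = S \<union> (\<Union>a\<in>S. \<Union>b\<in>S. {a \<oplus> b}) \<union> (\<Union>a\<in>S. {\<ominus> a}) \<union> (\<Union>a\<in>carrier R. \<Union>x\<in>S. {a \<odot> x})
     \<union> (\<Union>p\<in>Ps. \<Union>m\<in>UNIV. \<Union>n\<in>UNIV. \<Union>rl\<in>lists (carrier R). \<Union>cl\<in>lists S. wit (fst p) (snd p) m n (dr n rl) (dc cl))"

definition sq :: "'a set \<Rightarrow> nat \<Rightarrow> 'a set" where "sq A k = (step ^^ k) A"
definition clo :: "'a set \<Rightarrow> 'a set" where "clo A = (\<Union>k. sq A k)"

lemma wit_sub: "P \<subseteq> carrier N \<Longrightarrow> wit P rel m n r c \<subseteq> P"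
proof (cases "\<exists>x. solx P rel m n r c x")
  case True
  then have "solx P rel m n r c (SOME x. solx P rel m n r c x)" by (rule someI_ex)
  then show ?thesis unfolding wit_def solx_def using True by auto
qed (auto simp: wit_def)

lemma step_sub: "S \<subseteq> carrier N \<Longrightarrow> step S \<subseteq> carrier N"
proof -
  assume S: "S \<subseteq> carrier N"
  have W: "wit (fst p) (snd p) m n r c \<subseteq> carrier N" if "p \<in> Ps" for p m n r c
    using wit_sub[OF Ps_sub[OF that]] Ps_sub[OF that] by blast
  show ?thesis unfolding step_def
    apply (intro Un_least UN_least)
    using S W by auto
qed

lemma sq_sub: "A \<subseteq> carrier N \<Longrightarrow> sq A k \<subseteq> carrier N"
  by (induction k) (auto simp: sq_def dest: step_sub)

lemma clo_sub: "A \<subseteq> carrier N \<Longrightarrow> clo A \<subseteq> carrier N"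
  using sq_sub unfolding clo_def by blast

lemma step_incr: "S \<subseteq> step S" unfolding step_def by blast

lemma sq_Suc: "sq A (Suc k) = step (sq A k)" by (simp add: sq_def)

lemma sq_mono: assumes "k \<le> k'" shows "sq A k \<subseteq> sq A k'"
  by (rule lift_Suc_mono_le[of "sq A", OF _ assms]) (simp add: sq_Suc step_incr)

lemma A_clo: "A \<subseteq> clo A"
proof -
  have "sq A 0 = A" by (simp add: sq_def)
  then show ?thesis unfolding clo_def by blast
qed

lemma step_add: "a \<in> S \<Longrightarrow> b \<in> S \<Longrightarrow> a \<oplus> b \<in> step S"
proof -
  assume "a \<in> S" "b \<in> S"
  then have "a \<oplus> b \<in> (\<Union>a\<in>S. \<Union>b\<in>S. {a \<oplus> b})" by blast
  then show ?thesis unfolding step_def by (rule UnI1[OF UnI1[OF UnI1[OF UnI2]]])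
qed

lemma step_neg: "a \<in> S \<Longrightarrow> \<ominus> a \<in> step S"
proof -
  assume "a \<in> S"
  then have "\<ominus> a \<in> (\<Union>a\<in>S. {\<ominus> a})" by blast
  then show ?thesis unfolding step_def by (rule UnI1[OF UnI1[OF UnI2]])
qed

lemma step_sm: "r \<in> carrier R \<Longrightarrow> a \<in> S \<Longrightarrow> r \<odot> a \<in> step S"
proof -
  assume "r \<in> carrier R" "a \<in> S"
  then have "r \<odot> a \<in> (\<Union>a\<in>carrier R. \<Union>x\<in>S. {a \<odot> x})" by blast
  then show ?thesis unfolding step_def by (rule UnI1[OF UnI2])
qed

lemma fin_in_sq: fixes m :: nat shows "(\<forall>i<m. c i \<in> clo A) \<Longrightarrow> \<exists>k. \<forall>i<m. c i \<in> sq A k"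
proof (induction m)
  case 0 then show ?case by simp
next
  case (Suc m)
  then obtain k where k: "\<forall>i<m. c i \<in> sq A k" by auto
  obtain k' where k': "c m \<in> sq A k'" using Suc.prems unfolding clo_def by blast
  have "\<forall>i<Suc m. c i \<in> sq A (max k k')"
    using k k' sq_mono[of k "max k k'" A] sq_mono[of k' "max k k'" A] less_Suc_eq by auto
  then show ?case by blast
qed

lemma clo_add: "a \<in> clo A \<Longrightarrow> b \<in> clo A \<Longrightarrow> a \<oplus> b \<in> clo A"
proof -
  assume "a \<in> clo A" "b \<in> clo A"
  then obtain k k' where "a \<in> sq A k" "b \<in> sq A k'" unfolding clo_def by blast
  then have "a \<in> sq A (max k k')" "b \<in> sq A (max k k')"
    using sq_mono[of k "max k k'" A] sq_mono[of k' "max k k'" A] by auto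
  then have "a \<oplus> b \<in> sq A (Suc (max k k'))" unfolding sq_Suc by (rule step_add)
  then show ?thesis unfolding clo_def by blast
qed

lemma clo_neg: "a \<in> clo A \<Longrightarrow> \<ominus> a \<in> clo A"
proof -
  assume "a \<in> clo A"
  then obtain k where "a \<in> sq A k" unfolding clo_def by blast
  then have "\<ominus> a \<in> sq A (Suc k)" unfolding sq_Suc by (rule step_neg)
  then show ?thesis unfolding clo_def by blast
qed

lemma clo_sm: "r \<in> carrier R \<Longrightarrow> a \<in> clo A \<Longrightarrow> r \<odot> a \<in> clo A"
proof -
  assume r: "r \<in> carrier R" and "a \<in> clo A"
  then obtain k where "a \<in> sq A k" unfolding clo_def by blast
  then have "r \<odot> a \<in> sq A (Suc k)" unfolding sq_Suc by (rule step_sm[OF r])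
  then show ?thesis unfolding clo_def by blast
qed

lemma wit_step:
  assumes p: "p \<in> Ps" and rl: "rl \<in> lists (carrier R)" and cl: "cl \<in> lists S"
  shows "wit (fst p) (snd p) m n (dr n rl) (dc cl) \<subseteq> step S"
proof
  fix x assume x: "x \<in> wit (fst p) (snd p) m n (dr n rl) (dc cl)"
  have "x \<in> (\<Union>p\<in>Ps. \<Union>m\<in>UNIV. \<Union>n\<in>UNIV. \<Union>rl\<in>lists (carrier R). \<Union>cl\<in>lists S. wit (fst p) (snd p) m n (dr n rl) (dc cl))"
    apply (rule UN_I[of p], rule p)
    apply (rule UN_I[of m], rule UNIV_I)
    apply (rule UN_I[of n], rule UNIV_I)
    apply (rule UN_I[of rl], rule rl)
    apply (rule UN_I[of cl], rule cl)
    by (rule x)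
  then show "x \<in> step S" unfolding step_def by (rule UnI2)
qed

lemma clo_sol:
  assumes p: "p \<in> Ps" and r: "\<forall>i<m. \<forall>j<n. r i j \<in> carrier R" and c: "\<forall>i<m. c i \<in> clo A"
    and x: "solx (fst p) (snd p) m n r c x"
  shows "\<exists>y. solx (fst p \<inter> clo A) (snd p) m n r c y"
proof -
  obtain k where k: "\<forall>i<m. c i \<in> sq A k" using fin_in_sq[OF c] by blast
  define rl where "rl = map (\<lambda>k. r (k div n) (k mod n)) [0..<m*n]"
  define cl where "cl = map c [0..<m]"
  have rl: "rl \<in> lists (carrier R)"
  proof -
    { fix k assume "k < m*n"
      then have n0: "n > 0" by (cases n) auto
      have "k div n < m" using \<open>k < m*n\<close> n0 by (simp add: div_less_iff_less_mult)
      moreover have "k mod n < n" using n0 by simp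
      ultimately have "r (k div n) (k mod n) \<in> carrier R" using r by blast }
    then show ?thesis unfolding rl_def by auto
  qed
  have cl: "cl \<in> lists (sq A k)" unfolding cl_def using k by auto
  have dr: "dr n rl i j = r i j" if "i < m" "j < n" for i j
  proof -
    have "i*n+j < Suc i * n" using that by simp
    also have "\<dots> \<le> m*n" using that by (intro mult_le_mono1) simp
    finally have "i*n+j < m*n" .
    then show ?thesis unfolding dr_def rl_def using that by simp
  qed
  have dc: "dc cl i = c i" if "i < m" for i unfolding dc_def cl_def using that by simp
  have P: "fst p \<subseteq> carrier N" using Ps_sub p .
  have eq: "solx (fst p) (snd p) m n (dr n rl) (dc cl) z = solx (fst p) (snd p) m n r c z"
    if z: "\<forall>j<n. z j \<in> carrier N" for z
  proof -
    have "lf (dr n rl) z i n = lf r z i n" if "i < m" for i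
      by (rule lf_cong) (use dr that r z in auto)
    then show ?thesis unfolding solx_def using dc by auto
  qed
  have xN: "\<forall>j<n. x j \<in> carrier N" using x P unfolding solx_def by auto
  have ex: "\<exists>x. solx (fst p) (snd p) m n (dr n rl) (dc cl) x" using eq[OF xN] x by blast
  define y where "y = (SOME x. solx (fst p) (snd p) m n (dr n rl) (dc cl) x)"
  have y: "solx (fst p) (snd p) m n (dr n rl) (dc cl) y" unfolding y_def using someI_ex[OF ex] .
  have yN: "\<forall>j<n. y j \<in> carrier N" using y P unfolding solx_def by auto
  have "wit (fst p) (snd p) m n (dr n rl) (dc cl) = y ` {..<n}"
    unfolding wit_def y_def using ex by simp
  moreover have "wit (fst p) (snd p) m n (dr n rl) (dc cl) \<subseteq> step (sq A k)"
    by (rule wit_step[OF p rl cl])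
  ultimately have "y ` {..<n} \<subseteq> sq A (Suc k)" unfolding sq_Suc by simp
  then have "\<forall>j<n. y j \<in> clo A" unfolding clo_def by blast
  then have "solx (fst p \<inter> clo A) (snd p) m n r c y" using eq[OF yN] y unfolding solx_def by auto
  then show ?thesis by blast
qed

lemma step_card:
  assumes B: "infinite B" and RB: "|carrier R| \<le>o |B|" and S: "|S| \<le>o |B|"
  shows "|step S| \<le>o |B|"
proof -
  have sing: "\<And>z. |{z}| \<le>o |B|" by (rule fin_le_inf[OF _ B]) simp
  have U: "\<And>I f. |I| \<le>o |B| \<Longrightarrow> (\<forall>i\<in>I. ( |f i| \<le>o |B| )) \<Longrightarrow> |\<Union>i\<in>I. f i| \<le>o |B|"
    by (rule card_of_UNION_ordLeq_infinite[OF B])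
  have Un: "\<And>X Y. |X| \<le>o |B| \<Longrightarrow> |Y| \<le>o |B| \<Longrightarrow> |X \<union> Y| \<le>o |B|"
    using card_of_Un_ordLeq_infinite_Field[of "|B|"] B card_of_Card_order[of B] by (simp add: Field_card_of)
  have nat: "|UNIV::nat set| \<le>o |B|" using nat_le_inf[OF B] .
  have wfin: "|wit P rel m n r c| \<le>o |B|" for P rel m n r c
    by (rule fin_le_inf[OF _ B]) (simp add: wit_def)
  have 1: "|\<Union>a\<in>S. \<Union>b\<in>S. {a \<oplus> b}| \<le>o |B|" by (rule U[OF S], rule ballI, rule U[OF S], rule ballI, rule sing)
  have 2: "|\<Union>a\<in>S. {\<ominus> a}| \<le>o |B|" by (rule U[OF S], rule ballI, rule sing)
  have 3: "|\<Union>a\<in>carrier R. \<Union>x\<in>S. {a \<odot> x}| \<le>o |B|" by (rule U[OF RB], rule ballI, rule U[OF S], rule ballI, rule sing)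
  have lR: "|lists (carrier R)| \<le>o |B|" using lists_le[OF B RB] .
  have lS: "|lists S| \<le>o |B|" using lists_le[OF B S] .
  have PsB: "|Ps| \<le>o |B|" using fin_le_inf[OF Ps_fin B] .
  have 4: "|\<Union>p\<in>Ps. \<Union>m\<in>UNIV. \<Union>n\<in>UNIV. \<Union>rl\<in>lists (carrier R). \<Union>cl\<in>lists S. wit (fst p) (snd p) m n (dr n rl) (dc cl)| \<le>o |B|"
    by (rule U[OF PsB], rule ballI, rule U[OF nat], rule ballI, rule U[OF nat], rule ballI, rule U[OF lR], rule ballI, rule U[OF lS], rule ballI, rule wfin)
  show ?thesis unfolding step_def by (rule Un[OF Un[OF Un[OF Un[OF S 1] 2] 3] 4])
qed

lemma clo_card:
  assumes B: "infinite B" and RB: "|carrier R| \<le>o |B|" and A: "|A| \<le>o |B|"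
  shows "|clo A| \<le>o |B|"
proof -
  have "|sq A k| \<le>o |B|" for k
    by (induction k) (use A step_card[OF B RB] in \<open>auto simp: sq_def\<close>)
  then show ?thesis unfolding clo_def
    by (intro card_of_UNION_ordLeq_infinite[OF B nat_le_inf[OF B]]) auto
qed

end

definition agr :: "('r, 'm) ring_scheme \<Rightarrow> ('r, 'a) module \<Rightarrow> ('r, 'a) module \<Rightarrow> bool" where
  "agr R M N \<longleftrightarrow> left_module R M \<and> left_module R N \<and>
     carrier M \<subseteq> carrier N \<and> \<zero>\<^bsub>M\<^esub> = \<zero>\<^bsub>N\<^esub> \<and>
     (\<forall>x\<in>carrier M. \<forall>y\<in>carrier M. x \<oplus>\<^bsub>M\<^esub> y = x \<oplus>\<^bsub>N\<^esub> y) \<and>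
     (\<forall>a\<in>carrier R. \<forall>x\<in>carrier M. a \<odot>\<^bsub>M\<^esub> x = a \<odot>\<^bsub>N\<^esub> x)"

lemma pure_le_agr: "pure_le R M N \<Longrightarrow> agr R M N"
  unfolding pure_le_def agr_def by blast

lemma agr_ag: "agr R M N \<Longrightarrow> abelian_group M \<and> abelian_group N"
  unfolding agr_def left_module_def by blast

lemma agr_inv:
  assumes A: "agr R M N" and x: "x \<in> carrier M"
  shows "\<ominus>\<^bsub>M\<^esub> x = \<ominus>\<^bsub>N\<^esub> x"
proof -
  interpret M: abelian_group M using agr_ag[OF A] by blast
  interpret N: abelian_group N using agr_ag[OF A] by blast
  have sub: "carrier M \<subseteq> carrier N" and z: "\<zero>\<^bsub>M\<^esub> = \<zero>\<^bsub>N\<^esub>"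
    and ad: "\<forall>x\<in>carrier M. \<forall>y\<in>carrier M. x \<oplus>\<^bsub>M\<^esub> y = x \<oplus>\<^bsub>N\<^esub> y"
    using A unfolding agr_def by auto
  have "\<ominus>\<^bsub>M\<^esub> x \<oplus>\<^bsub>N\<^esub> x = \<zero>\<^bsub>N\<^esub>"
    using ad x z M.l_neg[OF x] by simp
  moreover have ic: "\<ominus>\<^bsub>M\<^esub> x \<in> carrier M" by (rule M.a_inv_closed[OF x])
  ultimately have "\<ominus>\<^bsub>N\<^esub> x = \<ominus>\<^bsub>M\<^esub> x" using N.minus_equality[of "\<ominus>\<^bsub>M\<^esub> x" x] sub x by blast
  then show ?thesis by simp
qed

lemma agr_finsum:
  fixes n :: nat
  assumes A: "agr R M N"
  shows "(\<forall>j<n. f j = g j \<and> f j \<in> carrier M) \<Longrightarrow> finsum M f {..<n} = finsum N g {..<n}"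
proof (induction n)
  interpret M: abelian_group M using agr_ag[OF A] by blast
  interpret N: abelian_group N using agr_ag[OF A] by blast
  case 0
  then show ?case using A unfolding agr_def by simp
next
  interpret M: abelian_group M using agr_ag[OF A] by blast
  interpret N: abelian_group N using agr_ag[OF A] by blast
  case (Suc n)
  have sub: "carrier M \<subseteq> carrier N"
    and ad: "\<forall>x\<in>carrier M. \<forall>y\<in>carrier M. x \<oplus>\<^bsub>M\<^esub> y = x \<oplus>\<^bsub>N\<^esub> y"
    using A unfolding agr_def by auto
  have f1: "\<forall>j<Suc n. f j \<in> carrier M" using Suc.prems by blast
  have f: "f \<in> {..<n} \<rightarrow> carrier M" "f n \<in> carrier M" using f1 by auto
  have g1: "\<forall>j<Suc n. g j \<in> carrier N"
  proof (intro allI impI)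
    fix j assume "j < Suc n"
    then have "f j = g j" "f j \<in> carrier M" using Suc.prems by blast+
    then show "g j \<in> carrier N" using sub by auto
  qed
  have g: "g \<in> {..<n} \<rightarrow> carrier N" "g n \<in> carrier N" using g1 by auto
  have "\<forall>j<n. f j = g j \<and> f j \<in> carrier M" using Suc.prems less_SucI by blast
  then have IH: "finsum M f {..<n} = finsum N g {..<n}" by (rule Suc.IH)
  have "finsum M f {..<Suc n} = f n \<oplus>\<^bsub>M\<^esub> finsum M f {..<n}"
    unfolding lessThan_Suc by (rule M.finsum_insert) (use f in auto)
  also have "\<dots> = f n \<oplus>\<^bsub>N\<^esub> finsum M f {..<n}" using ad f M.finsum_closed[OF f(1)] by blast
  also have "\<dots> = g n \<oplus>\<^bsub>N\<^esub> finsum N g {..<n}" using IH Suc.prems by simp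
  also have "\<dots> = finsum N g {..<Suc n}"
    unfolding lessThan_Suc by (rule N.finsum_insert[symmetric]) (use g in auto)
  finally show ?case .
qed

lemma agr_lf:
  fixes n :: nat
  assumes A: "agr R M N" and r: "\<forall>j<n. r j \<in> carrier R" and x: "\<forall>j<n. x j \<in> carrier M"
  shows "finsum M (\<lambda>j. r j \<odot>\<^bsub>M\<^esub> x j) {..<n} = finsum N (\<lambda>j. r j \<odot>\<^bsub>N\<^esub> x j) {..<n}"
proof (rule agr_finsum[OF A], intro allI impI conjI)
  fix j assume j: "j < n"
  show "r j \<odot>\<^bsub>M\<^esub> x j = r j \<odot>\<^bsub>N\<^esub> x j" using A r x j unfolding agr_def by auto
  show "r j \<odot>\<^bsub>M\<^esub> x j \<in> carrier M" using A r x j unfolding agr_def left_module_def by auto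
qed

lemma agr_trans:
  "agr R A N \<Longrightarrow> agr R C N \<Longrightarrow> carrier A \<subseteq> carrier C \<Longrightarrow> agr R A C"
  unfolding agr_def by (auto simp: subset_eq)

lemma agr_refl: "left_module R N \<Longrightarrow> agr R N N"
  unfolding agr_def by auto

lemma sub_lm:
  assumes N: "left_module R N" and T: "T \<subseteq> carrier N" "\<zero>\<^bsub>N\<^esub> \<in> T"
    "\<forall>x\<in>T. \<forall>y\<in>T. x \<oplus>\<^bsub>N\<^esub> y \<in> T" "\<forall>x\<in>T. \<ominus>\<^bsub>N\<^esub> x \<in> T" "\<forall>a\<in>carrier R. \<forall>x\<in>T. a \<odot>\<^bsub>N\<^esub> x \<in> T"
  shows "agr R (N\<lparr>carrier := T\<rparr>) N"
proof -
  interpret lm R N by (rule lm.intro[OF N])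
  have ag: "abelian_group (N\<lparr>carrier := T\<rparr>)"
  proof (rule abelian_groupI)
    fix x assume x: "x \<in> carrier (N\<lparr>carrier := T\<rparr>)"
    then have "\<ominus>\<^bsub>N\<^esub> x \<in> T" "\<ominus>\<^bsub>N\<^esub> x \<oplus>\<^bsub>N\<^esub> x = \<zero>\<^bsub>N\<^esub>" using T l_neg by auto
    then show "\<exists>y\<in>carrier (N\<lparr>carrier := T\<rparr>). y \<oplus>\<^bsub>N\<lparr>carrier := T\<rparr>\<^esub> x = \<zero>\<^bsub>N\<lparr>carrier := T\<rparr>\<^esub>"
      by auto
  qed (use T in \<open>auto simp: a_ac subset_eq\<close>)
  have "left_module R (N\<lparr>carrier := T\<rparr>)"
    using N T ag unfolding left_module_def by (auto simp: subset_eq)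
  then show ?thesis using N T unfolding agr_def by auto
qed

lemma pure_le_intro:
  assumes AC: "agr R A C" and CN: "agr R C N"
    and P: "\<And>(m::nat) (n::nat) r c. (\<forall>i<m. \<forall>j<n. r i j \<in> carrier R) \<Longrightarrow> (\<forall>i<m. c i \<in> carrier A) \<Longrightarrow>
       (\<exists>x. (\<forall>j<n. x j \<in> carrier C) \<and> (\<forall>i<m. finsum N (\<lambda>j. r i j \<odot>\<^bsub>N\<^esub> x j) {..<n} = c i)) \<Longrightarrow>
       (\<exists>y. (\<forall>j<n. y j \<in> carrier A) \<and> (\<forall>i<m. finsum N (\<lambda>j. r i j \<odot>\<^bsub>N\<^esub> y j) {..<n} = c i))"
  shows "pure_le R A C"
proof -
  have AN: "agr R A N" using AC CN unfolding agr_def by (auto simp: subset_eq)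
  interpret A: abelian_group A using agr_ag[OF AC] by blast
  have lA: "left_module R A" using AC unfolding agr_def by blast
  have sub: "submod R C (carrier A)"
    unfolding submod_def
  proof (intro conjI ballI)
    show "carrier A \<subseteq> carrier C" using AC unfolding agr_def by blast
    have "\<zero>\<^bsub>A\<^esub> = \<zero>\<^bsub>C\<^esub>" using AC unfolding agr_def by blast
    then show "\<zero>\<^bsub>C\<^esub> \<in> carrier A" using A.zero_closed by simp
    fix x assume x: "x \<in> carrier A"
    have "\<ominus>\<^bsub>A\<^esub> x \<in> carrier A" by (rule A.a_inv_closed[OF x])
    then show "\<ominus>\<^bsub>C\<^esub> x \<in> carrier A" using agr_inv[OF AC x] by simp
    { fix y assume y: "y \<in> carrier A"
      have "x \<oplus>\<^bsub>A\<^esub> y \<in> carrier A" by (rule A.a_closed[OF x y])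
      then show "x \<oplus>\<^bsub>C\<^esub> y \<in> carrier A" using AC x y unfolding agr_def by auto }
    { fix a assume a: "a \<in> carrier R"
      show "a \<odot>\<^bsub>C\<^esub> x \<in> carrier A" using AC lA x a unfolding agr_def left_module_def by auto }
  qed
  have pure: "pure_submod R C (carrier A)"
    unfolding pure_submod_def
  proof (intro conjI sub allI impI)
    fix m n :: nat and r and c
    assume r: "\<forall>i<m. \<forall>j<n. r i j \<in> carrier R" and c: "\<forall>i<m. c i \<in> carrier A"
      and ex: "\<exists>x. (\<forall>j<n. x j \<in> carrier C) \<and> (\<forall>i<m. finsum C (\<lambda>j. r i j \<odot>\<^bsub>C\<^esub> x j) {..<n} = c i)"
    then obtain x where x: "\<forall>j<n. x j \<in> carrier C" "\<forall>i<m. finsum C (\<lambda>j. r i j \<odot>\<^bsub>C\<^esub> x j) {..<n} = c i" by blast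
    have "\<forall>i<m. finsum N (\<lambda>j. r i j \<odot>\<^bsub>N\<^esub> x j) {..<n} = c i"
      using x agr_lf[OF CN, of n _ x] r by simp
    then obtain y where y: "\<forall>j<n. y j \<in> carrier A" "\<forall>i<m. finsum N (\<lambda>j. r i j \<odot>\<^bsub>N\<^esub> y j) {..<n} = c i"
      using P[OF r c] x(1) by blast
    have "\<forall>i<m. finsum C (\<lambda>j. r i j \<odot>\<^bsub>C\<^esub> y j) {..<n} = c i"
    proof (intro allI impI)
      fix i assume i: "i < m"
      have yC: "\<forall>j<n. y j \<in> carrier C" using y(1) AC unfolding agr_def by auto
      show "finsum C (\<lambda>j. r i j \<odot>\<^bsub>C\<^esub> y j) {..<n} = c i"
        using agr_lf[OF CN, of n "r i" y] yC r i y(2) by simp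
    qed
    then show "\<exists>y. (\<forall>j<n. y j \<in> carrier A) \<and> (\<forall>i<m. finsum C (\<lambda>j. r i j \<odot>\<^bsub>C\<^esub> y j) {..<n} = c i)"
      using y(1) by blast
  qed
  show ?thesis unfolding pure_le_def using AC pure unfolding agr_def by blast
qed

context abelian_group begin
lemma G7: "x \<in> carrier G \<Longrightarrow> z \<in> carrier G \<Longrightarrow> d \<in> carrier G \<Longrightarrow> x = d \<oplus> z \<Longrightarrow> x \<ominus> z = d"
  using add.inv_solve_right'[of d x z] minus_eq[of x z] by simp
lemma G8: "w \<in> carrier G \<Longrightarrow> y \<in> carrier G \<Longrightarrow> w = (w \<ominus> y) \<oplus> y"
  using add.inv_solve_right'[of "w \<ominus> y" w y] minus_eq[of w y] by simp
lemma G4: "u \<in> carrier G \<Longrightarrow> v \<in> carrier G \<Longrightarrow> u \<oplus> (v \<ominus> u) = v"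
  using G8[of v u] a_comm[of u "v \<ominus> u"] by simp
lemma G5: "a \<in> carrier G \<Longrightarrow> b \<in> carrier G \<Longrightarrow> (a \<oplus> b) \<ominus> a = b"
  using G7[of "a \<oplus> b" a b] a_comm[of a b] by simp
lemma G1a:
  assumes x: "x \<in> carrier G" and y: "y \<in> carrier G" and z: "z \<in> carrier G" and w: "w \<in> carrier G"
    and e: "x \<oplus> y = z \<oplus> w"
  shows "x \<ominus> z = w \<ominus> y"
proof -
  have d: "w \<ominus> y \<in> carrier G" using w y by simp
  have "x \<oplus> y = z \<oplus> ((w \<ominus> y) \<oplus> y)" using e G8[OF w y] by simp
  also have "\<dots> = (z \<oplus> (w \<ominus> y)) \<oplus> y" using a_assoc[OF z d y] by simp
  finally have "x = z \<oplus> (w \<ominus> y)" using add.right_cancel[OF y x] z d by simp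
  also have "\<dots> = (w \<ominus> y) \<oplus> z" using a_comm[OF z d] .
  finally show ?thesis using G7[OF x z d] by simp
qed
lemma G1b:
  assumes x: "x \<in> carrier G" and y: "y \<in> carrier G" and z: "z \<in> carrier G" and w: "w \<in> carrier G"
    and e: "x \<ominus> z = w \<ominus> y"
  shows "x \<oplus> y = z \<oplus> w"
proof -
  have d: "w \<ominus> y \<in> carrier G" using w y by simp
  have "x = (x \<ominus> z) \<oplus> z" using G8[OF x z] .
  also have "\<dots> = (w \<ominus> y) \<oplus> z" using e by simp
  finally have "x \<oplus> y = ((w \<ominus> y) \<oplus> z) \<oplus> y" by simp
  also have "\<dots> = (z \<oplus> (w \<ominus> y)) \<oplus> y" using a_comm[OF z d] by simp
  also have "\<dots> = z \<oplus> ((w \<ominus> y) \<oplus> y)" using a_assoc[OF z d y] .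
  also have "\<dots> = z \<oplus> w" using G8[OF w y] by simp
  finally show ?thesis .
qed
lemma G2:
  assumes u: "u \<in> carrier G" and a: "a \<in> carrier G" and b: "b \<in> carrier G"
  shows "(a \<oplus> b) \<ominus> u = b \<ominus> (u \<ominus> a)"
proof (rule G1a)
  have d: "u \<ominus> a \<in> carrier G" using u a by simp
  have "(a \<oplus> b) \<oplus> (u \<ominus> a) = (a \<oplus> (u \<ominus> a)) \<oplus> b" using a b d by (simp add: a_ac)
  also have "\<dots> = u \<oplus> b" using G4[OF a u] by simp
  finally show "(a \<oplus> b) \<oplus> (u \<ominus> a) = u \<oplus> b" .
qed (use u a b in simp_all)
lemma G6:
  assumes x: "x \<in> carrier G" and y: "y \<in> carrier G"
  shows "\<ominus> (x \<ominus> y) = y \<ominus> x"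
proof -
  have "\<ominus> (x \<ominus> y) = \<ominus> x \<oplus> \<ominus> (\<ominus> y)" using minus_add[of x "\<ominus> y"] x y minus_eq[of x y] by simp
  also have "\<dots> = \<ominus> x \<oplus> y" using minus_minus[OF y] by simp
  also have "\<dots> = y \<oplus> \<ominus> x" using a_comm[of "\<ominus> x" y] x y by simp
  finally show ?thesis using minus_eq[of y x] by simp
qed
end
context lm begin
lemma pure_use:
  fixes m n :: nat
  assumes P: "pure_submod R N T" and r: "\<forall>i<m. \<forall>j<n. r i j \<in> carrier R" and c: "\<forall>i<m. c i \<in> T"
    and x: "\<forall>j<n. x j \<in> carrier N" and e: "\<forall>i<m. lf r x i n = c i"
  shows "\<exists>y. (\<forall>j<n. y j \<in> T) \<and> (\<forall>i<m. lf r y i n = c i)"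
proof -
  have H: "\<forall>(m::nat) (n::nat) r c.
        (\<forall>i<m. \<forall>j<n. r i j \<in> carrier R) \<longrightarrow> (\<forall>i<m. c i \<in> T) \<longrightarrow>
        (\<exists>x. (\<forall>j<n. x j \<in> carrier N) \<and>
              (\<forall>i<m. finsum N (\<lambda>j. r i j \<odot>\<^bsub>N\<^esub> x j) {..<n} = c i)) \<longrightarrow>
        (\<exists>y. (\<forall>j<n. y j \<in> T) \<and>
              (\<forall>i<m. finsum N (\<lambda>j. r i j \<odot>\<^bsub>N\<^esub> y j) {..<n} = c i))"
    using P unfolding pure_submod_def by (rule conjunct2)
  have ex: "\<exists>x. (\<forall>j<n. x j \<in> carrier N) \<and> (\<forall>i<m. finsum N (\<lambda>j. r i j \<odot>\<^bsub>N\<^esub> x j) {..<n} = c i)"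
    using x e unfolding lf_def by blast
  note H' = spec[of _ c, OF spec[of _ r, OF spec[of _ n, OF spec[of _ m, OF H]]]]
  show ?thesis using mp[OF mp[OF mp[OF H' r] c] ex] unfolding lf_def .
qed
end

context lm begin

lemma main:
  fixes M1 M2 :: "('r, 'a) module"
  assumes pM1: "pure_le R M1 N" and pM2: "pure_le R M2 N"
  shows "\<exists>M1' M0. pure_le R M0 M1' \<and> pure_le R M1' N \<and>
           pure_le R M0 M2 \<and> pure_le R M1 M1' \<and>
           (card_of (carrier M0), card_of (carrier M1 <+> carrier R <+> (UNIV::nat set))) \<in> ordLeq \<and>
           indep R M0 M1' M2 N"
proof -
  define P2 where "P2 = carrier M2"
  have lN: "left_module R N" by (rule lmod)
  have agr1N: "agr R M1 N" by (rule pure_le_agr[OF pM1])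
  have agr2N: "agr R M2 N" by (rule pure_le_agr[OF pM2])
  have ps1: "pure_submod R N (carrier M1)" using pM1 unfolding pure_le_def by blast
  have ps2: "pure_submod R N P2" using pM2 unfolding pure_le_def P2_def by blast
  have sm1: "submod R N (carrier M1)" using ps1 unfolding pure_submod_def by blast
  have sm2: "submod R N P2" using ps2 unfolding pure_submod_def by blast
  have M1N: "carrier M1 \<subseteq> carrier N" and z1: "\<zero> \<in> carrier M1"
    using sm1 unfolding submod_def by blast+
  have P2N: "P2 \<subseteq> carrier N" and z2: "\<zero> \<in> P2"
    and P2add: "\<And>x y. x \<in> P2 \<Longrightarrow> y \<in> P2 \<Longrightarrow> x \<oplus> y \<in> P2"
    and P2neg: "\<And>x. x \<in> P2 \<Longrightarrow> \<ominus> x \<in> P2"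
    and P2sm: "\<And>a x. a \<in> carrier R \<Longrightarrow> x \<in> P2 \<Longrightarrow> a \<odot> x \<in> P2"
    using sm2 unfolding submod_def by blast+
  have P2min: "\<And>x y. x \<in> P2 \<Longrightarrow> y \<in> P2 \<Longrightarrow> x \<ominus> y \<in> P2"
    using P2add P2neg unfolding a_minus_def by blast
  define Ps where "Ps = {(carrier N, (=)), (carrier N, \<lambda>u v. u \<ominus> v \<in> P2), (P2, (=))}"
  interpret C: clos R N Ps
    by (rule clos.intro[OF lm_axioms], rule clos_axioms.intro) (use P2N in \<open>auto simp: Ps_def\<close>)
  define S where "S = C.clo (carrier M1)"
  have SN: "S \<subseteq> carrier N" unfolding S_def by (rule C.clo_sub[OF M1N])
  have M1S: "carrier M1 \<subseteq> S" unfolding S_def by (rule C.A_clo)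
  have S0: "\<zero> \<in> S" using z1 M1S by blast
  have Sadd: "\<And>x y. x \<in> S \<Longrightarrow> y \<in> S \<Longrightarrow> x \<oplus> y \<in> S" unfolding S_def by (rule C.clo_add)
  have Sneg: "\<And>x. x \<in> S \<Longrightarrow> \<ominus> x \<in> S" unfolding S_def by (rule C.clo_neg)
  have Ssm: "\<And>a x. a \<in> carrier R \<Longrightarrow> x \<in> S \<Longrightarrow> a \<odot> x \<in> S" unfolding S_def by (rule C.clo_sm)
  have Smin: "\<And>x y. x \<in> S \<Longrightarrow> y \<in> S \<Longrightarrow> x \<ominus> y \<in> S"
    using Sadd Sneg unfolding a_minus_def by blast

  have cl1: "\<exists>y. (\<forall>j<n. y j \<in> S) \<and> (\<forall>i<m. lf r y i n = c i)"
    if r: "\<forall>i<m. \<forall>j<n. r i j \<in> carrier R" and c: "\<forall>i<m. c i \<in> S"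
      and x: "\<forall>j<n. x j \<in> carrier N" and e: "\<forall>i<m. lf r x i n = c i"
    for m n :: nat and r c x
  proof -
    let ?p = "(carrier N, (=))"
    have p: "?p \<in> Ps" unfolding Ps_def by simp
    have sol: "C.solx (fst ?p) (snd ?p) m n r c x"
      unfolding C.solx_def using x e by simp
    have "\<exists>y. C.solx (fst ?p \<inter> C.clo (carrier M1)) (snd ?p) m n r c y"
      using C.clo_sol[OF p r c[unfolded S_def] sol] by simp
    then obtain y where y: "C.solx (fst ?p \<inter> C.clo (carrier M1)) (snd ?p) m n r c y" ..
    show ?thesis using y unfolding C.solx_def S_def by auto
  qed
  have cl2: "\<exists>y. (\<forall>j<n. y j \<in> S) \<and> (\<forall>i<m. lf r y i n \<ominus> c i \<in> P2)"
    if r: "\<forall>i<m. \<forall>j<n. r i j \<in> carrier R" and c: "\<forall>i<m. c i \<in> S"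
      and x: "\<forall>j<n. x j \<in> carrier N" and e: "\<forall>i<m. lf r x i n \<ominus> c i \<in> P2"
    for m n :: nat and r c x
  proof -
    let ?p = "(carrier N, \<lambda>u v. u \<ominus> v \<in> P2)"
    have p: "?p \<in> Ps" unfolding Ps_def by simp
    have sol: "C.solx (fst ?p) (snd ?p) m n r c x"
      unfolding C.solx_def using x e by simp
    have "\<exists>y. C.solx (fst ?p \<inter> C.clo (carrier M1)) (snd ?p) m n r c y"
      using C.clo_sol[OF p r c[unfolded S_def] sol] by simp
    then obtain y where y: "C.solx (fst ?p \<inter> C.clo (carrier M1)) (snd ?p) m n r c y" ..
    show ?thesis using y unfolding C.solx_def S_def by auto
  qed
  have cl3: "\<exists>y. (\<forall>j<n. y j \<in> S \<inter> P2) \<and> (\<forall>i<m. lf r y i n = c i)"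
    if r: "\<forall>i<m. \<forall>j<n. r i j \<in> carrier R" and c: "\<forall>i<m. c i \<in> S"
      and x: "\<forall>j<n. x j \<in> P2" and e: "\<forall>i<m. lf r x i n = c i"
    for m n :: nat and r c x
  proof -
    let ?p = "(P2, (=))"
    have p: "?p \<in> Ps" unfolding Ps_def by simp
    have sol: "C.solx (fst ?p) (snd ?p) m n r c x"
      unfolding C.solx_def using x e by simp
    have "\<exists>y. C.solx (fst ?p \<inter> C.clo (carrier M1)) (snd ?p) m n r c y"
      using C.clo_sol[OF p r c[unfolded S_def] sol] by simp
    then obtain y where y: "C.solx (fst ?p \<inter> C.clo (carrier M1)) (snd ?p) m n r c y" ..
    show ?thesis using y unfolding C.solx_def S_def by auto
  qed

  define M1' where "M1' = N\<lparr>carrier := S\<rparr>"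
  define M0 where "M0 = N\<lparr>carrier := S \<inter> P2\<rparr>"
  have cM1': "carrier M1' = S" unfolding M1'_def by simp
  have cM0: "carrier M0 = S \<inter> P2" unfolding M0_def by simp
  have agr1: "agr R M1' N" unfolding M1'_def
    by (rule sub_lm[OF lN SN S0]) (use Sadd Sneg Ssm in blast)+
  have agr0: "agr R M0 N" unfolding M0_def
  proof (rule sub_lm[OF lN])
    show "S \<inter> P2 \<subseteq> carrier N" using SN by blast
    show "\<zero> \<in> S \<inter> P2" using S0 z2 by blast
    show "\<forall>x\<in>S \<inter> P2. \<forall>y\<in>S \<inter> P2. x \<oplus> y \<in> S \<inter> P2" using Sadd P2add by blast
    show "\<forall>x\<in>S \<inter> P2. \<ominus> x \<in> S \<inter> P2" using Sneg P2neg by blast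
    show "\<forall>a\<in>carrier R. \<forall>x\<in>S \<inter> P2. a \<odot> x \<in> S \<inter> P2" using Ssm P2sm by blast
  qed
  have agr01: "agr R M0 M1'" by (rule agr_trans[OF agr0 agr1]) (simp add: cM0 cM1')
  have agr02: "agr R M0 M2" by (rule agr_trans[OF agr0 agr2N]) (simp add: cM0 P2_def)
  have agr11: "agr R M1 M1'" by (rule agr_trans[OF agr1N agr1]) (simp add: cM1' M1S)

  have lfe: "finsum N (\<lambda>j. r i j \<odot>\<^bsub>N\<^esub> x j) {..<n} = lf r x i n" for r x i n
    unfolding lf_def ..

  have pb: "pure_le R M1' N"
  proof (rule pure_le_intro[OF agr1 agr_refl[OF lN]])
    fix m n :: nat and r c
    assume r: "\<forall>i<m. \<forall>j<n. r i j \<in> carrier R" and c: "\<forall>i<m. c i \<in> carrier M1'"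
      and "\<exists>x. (\<forall>j<n. x j \<in> carrier N) \<and> (\<forall>i<m. finsum N (\<lambda>j. r i j \<odot>\<^bsub>N\<^esub> x j) {..<n} = c i)"
    then obtain x where x: "\<forall>j<n. x j \<in> carrier N" "\<forall>i<m. lf r x i n = c i" unfolding lfe by blast
    show "\<exists>y. (\<forall>j<n. y j \<in> carrier M1') \<and> (\<forall>i<m. finsum N (\<lambda>j. r i j \<odot>\<^bsub>N\<^esub> y j) {..<n} = c i)"
      unfolding lfe cM1' using cl1[OF r c[unfolded cM1'] x] .
  qed
  have pa: "pure_le R M0 M1'"
  proof (rule pure_le_intro[OF agr01 agr1])
    fix m n :: nat and r c
    assume r: "\<forall>i<m. \<forall>j<n. r i j \<in> carrier R" and c: "\<forall>i<m. c i \<in> carrier M0"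
      and "\<exists>x. (\<forall>j<n. x j \<in> carrier M1') \<and> (\<forall>i<m. finsum N (\<lambda>j. r i j \<odot>\<^bsub>N\<^esub> x j) {..<n} = c i)"
    then obtain x where x: "\<forall>j<n. x j \<in> S" "\<forall>i<m. lf r x i n = c i" unfolding lfe cM1' by blast
    have xN: "\<forall>j<n. x j \<in> carrier N" using x(1) SN by blast
    have cP: "\<forall>i<m. c i \<in> P2" and cS: "\<forall>i<m. c i \<in> S" using c unfolding cM0 by blast+
    obtain y where y: "\<forall>j<n. y j \<in> P2" "\<forall>i<m. lf r y i n = c i"
      using pure_use[OF ps2 r cP xN x(2)] by blast
    show "\<exists>y. (\<forall>j<n. y j \<in> carrier M0) \<and> (\<forall>i<m. finsum N (\<lambda>j. r i j \<odot>\<^bsub>N\<^esub> y j) {..<n} = c i)"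
      unfolding lfe cM0 using cl3[OF r cS y] .
  qed
  have pc: "pure_le R M0 M2"
  proof (rule pure_le_intro[OF agr02 agr2N])
    fix m n :: nat and r c
    assume r: "\<forall>i<m. \<forall>j<n. r i j \<in> carrier R" and c: "\<forall>i<m. c i \<in> carrier M0"
      and "\<exists>x. (\<forall>j<n. x j \<in> carrier M2) \<and> (\<forall>i<m. finsum N (\<lambda>j. r i j \<odot>\<^bsub>N\<^esub> x j) {..<n} = c i)"
    then obtain x where x: "\<forall>j<n. x j \<in> P2" "\<forall>i<m. lf r x i n = c i" unfolding lfe P2_def by blast
    have cS: "\<forall>i<m. c i \<in> S" using c unfolding cM0 by blast
    show "\<exists>y. (\<forall>j<n. y j \<in> carrier M0) \<and> (\<forall>i<m. finsum N (\<lambda>j. r i j \<odot>\<^bsub>N\<^esub> y j) {..<n} = c i)"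
      unfolding lfe cM0 using cl3[OF r cS x] .
  qed
  have pd: "pure_le R M1 M1'"
  proof (rule pure_le_intro[OF agr11 agr1])
    fix m n :: nat and r c
    assume r: "\<forall>i<m. \<forall>j<n. r i j \<in> carrier R" and c: "\<forall>i<m. c i \<in> carrier M1"
      and "\<exists>x. (\<forall>j<n. x j \<in> carrier M1') \<and> (\<forall>i<m. finsum N (\<lambda>j. r i j \<odot>\<^bsub>N\<^esub> x j) {..<n} = c i)"
    then obtain x where x: "\<forall>j<n. x j \<in> S" "\<forall>i<m. lf r x i n = c i" unfolding lfe cM1' by blast
    have xN: "\<forall>j<n. x j \<in> carrier N" using x(1) SN by blast
    show "\<exists>y. (\<forall>j<n. y j \<in> carrier M1) \<and> (\<forall>i<m. finsum N (\<lambda>j. r i j \<odot>\<^bsub>N\<^esub> y j) {..<n} = c i)"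
      unfolding lfe using pure_use[OF ps1 r c xN x(2)] .
  qed
  have card: "(card_of (carrier M0), card_of (carrier M1 <+> carrier R <+> (UNIV::nat set))) \<in> ordLeq"
  proof -
    let ?B = "carrier M1 <+> carrier R <+> (UNIV::nat set)"
    have B: "infinite ?B" by simp
    have RB: "|carrier R| \<le>o |?B|"
      by (rule ordLeq_transitive[OF card_of_Plus1[of "carrier R" "UNIV::nat set"] card_of_Plus2[of "carrier R <+> (UNIV::nat set)" "carrier M1"]])
    have AB: "|carrier M1| \<le>o |?B|" by (rule card_of_Plus1)
    have SB: "|S| \<le>o |?B|" unfolding S_def by (rule C.clo_card[OF B RB AB])
    have "|carrier M0| \<le>o |S|" unfolding cM0 by (rule card_of_mono1) blast
    then show ?thesis using SB by (rule ordLeq_transitive)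
  qed
  have ind: "indep R M0 M1' M2 N"
  proof -
    have cM2: "carrier M2 = P2" by (simp add: P2_def)
    have add2: "\<And>x y. x \<in> P2 \<Longrightarrow> y \<in> P2 \<Longrightarrow> x \<oplus>\<^bsub>M2\<^esub> y = x \<oplus> y"
      using agr2N cM2 unfolding agr_def by blast
    have neg2: "\<And>x. x \<in> P2 \<Longrightarrow> \<ominus>\<^bsub>M2\<^esub> x = \<ominus> x"
      using agr_inv[OF agr2N] cM2 by blast
    have neg1: "\<And>x. x \<in> S \<Longrightarrow> \<ominus>\<^bsub>M1'\<^esub> x = \<ominus> x"
      using agr_inv[OF agr1] cM1' by blast
    have add1: "\<And>x y. x \<oplus>\<^bsub>M1'\<^esub> y = x \<oplus> y" unfolding M1'_def by simp
    have minus1: "\<And>a a'. a \<in> S \<Longrightarrow> a' \<in> S \<Longrightarrow> a \<ominus>\<^bsub>M1'\<^esub> a' = a \<ominus> a'"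
      unfolding a_minus_def using add1 neg1 by simp
    have minus2: "\<And>b b'. b \<in> P2 \<Longrightarrow> b' \<in> P2 \<Longrightarrow> b \<ominus>\<^bsub>M2\<^esub> b' = b \<ominus> b'"
    proof -
      fix b b' assume b: "b \<in> P2" and b': "b' \<in> P2"
      have "b \<ominus>\<^bsub>M2\<^esub> b' = b \<oplus>\<^bsub>M2\<^esub> \<ominus> b'" unfolding a_minus_def using neg2[OF b'] by simp
      also have "\<dots> = b \<oplus> \<ominus> b'" using add2[OF b P2neg[OF b']] .
      finally show "b \<ominus>\<^bsub>M2\<^esub> b' = b \<ominus> b'" unfolding a_minus_def .
    qed
    have SNx: "\<And>x. x \<in> S \<Longrightarrow> x \<in> carrier N" using SN by blast
    have PNx: "\<And>x. x \<in> P2 \<Longrightarrow> x \<in> carrier N" using P2N by blast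
    have key: "(\<exists>m\<in>S \<inter> P2. a \<ominus> a' = m \<and> b \<ominus> b' = \<ominus> m) \<longleftrightarrow> a \<oplus> b = a' \<oplus> b'"
      if a: "a \<in> S" and b: "b \<in> P2" and a': "a' \<in> S" and b': "b' \<in> P2" for a b a' b'
    proof
      assume "\<exists>m\<in>S \<inter> P2. a \<ominus> a' = m \<and> b \<ominus> b' = \<ominus> m"
      then obtain m where m: "m \<in> S \<inter> P2" "a \<ominus> a' = m" "b \<ominus> b' = \<ominus> m" by blast
      have mN: "m \<in> carrier N" using m(1) SN by blast
      have "m = \<ominus> (\<ominus> m)" using minus_minus[OF mN] by simp
      also have "\<dots> = \<ominus> (b \<ominus> b')" using m(3) by simp
      also have "\<dots> = b' \<ominus> b" by (rule G6[OF PNx[OF b] PNx[OF b']])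
      finally have "a \<ominus> a' = b' \<ominus> b" using m(2) by simp
      then show "a \<oplus> b = a' \<oplus> b'" by (rule G1b[OF SNx[OF a] PNx[OF b] SNx[OF a'] PNx[OF b']])
    next
      assume e: "a \<oplus> b = a' \<oplus> b'"
      have d: "a \<ominus> a' = b' \<ominus> b" by (rule G1a[OF SNx[OF a] PNx[OF b] SNx[OF a'] PNx[OF b'] e])
      have "a \<ominus> a' \<in> S" using Smin[OF a a'] .
      moreover have "a \<ominus> a' \<in> P2" using d P2min[OF b' b] by simp
      moreover have "b \<ominus> b' = \<ominus> (a \<ominus> a')"
        using d G6[OF PNx[OF b'] PNx[OF b]] by simp
      ultimately show "\<exists>m\<in>S \<inter> P2. a \<ominus> a' = m \<and> b \<ominus> b' = \<ominus> m" by blast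
    qed
    define rel where "rel = {((a, b), (a', b')). a \<in> S \<and> b \<in> P2 \<and> a' \<in> S \<and> b' \<in> P2 \<and> a \<oplus> b = a' \<oplus> b'}"
    have relq: "q \<in> pushout_rel M0 M1' M2 \<longleftrightarrow> q \<in> rel" for q
    proof -
      obtain a b a' b' where q: "q = ((a, b), (a', b'))" by (metis prod.exhaust)
      have "q \<in> pushout_rel M0 M1' M2 \<longleftrightarrow> a \<in> S \<and> b \<in> P2 \<and> a' \<in> S \<and> b' \<in> P2 \<and>
          (\<exists>m\<in>S \<inter> P2. a \<ominus>\<^bsub>M1'\<^esub> a' = m \<and> b \<ominus>\<^bsub>M2\<^esub> b' = \<ominus>\<^bsub>M2\<^esub> m)"
        unfolding q pushout_rel_def cM1' cM0 cM2 by simp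
      also have "\<dots> \<longleftrightarrow> a \<in> S \<and> b \<in> P2 \<and> a' \<in> S \<and> b' \<in> P2 \<and>
          (\<exists>m\<in>S \<inter> P2. a \<ominus> a' = m \<and> b \<ominus> b' = \<ominus> m)"
      proof (intro iffI conjI; (elim conjE)?)
        assume h: "a \<in> S" "b \<in> P2" "a' \<in> S" "b' \<in> P2"
          "\<exists>m\<in>S \<inter> P2. a \<ominus>\<^bsub>M1'\<^esub> a' = m \<and> b \<ominus>\<^bsub>M2\<^esub> b' = \<ominus>\<^bsub>M2\<^esub> m"
        then obtain m where m: "m \<in> S \<inter> P2" "a \<ominus>\<^bsub>M1'\<^esub> a' = m" "b \<ominus>\<^bsub>M2\<^esub> b' = \<ominus>\<^bsub>M2\<^esub> m" by blast
        have "a \<ominus> a' = m" "b \<ominus> b' = \<ominus> m"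
          using m minus1[OF h(1) h(3)] minus2[OF h(2) h(4)] neg2[of m] by auto
        then show "\<exists>m\<in>S \<inter> P2. a \<ominus> a' = m \<and> b \<ominus> b' = \<ominus> m" using m(1) by blast
      next
        assume h: "a \<in> S" "b \<in> P2" "a' \<in> S" "b' \<in> P2"
          "\<exists>m\<in>S \<inter> P2. a \<ominus> a' = m \<and> b \<ominus> b' = \<ominus> m"
        then obtain m where m: "m \<in> S \<inter> P2" "a \<ominus> a' = m" "b \<ominus> b' = \<ominus> m" by blast
        have "a \<ominus>\<^bsub>M1'\<^esub> a' = m" "b \<ominus>\<^bsub>M2\<^esub> b' = \<ominus>\<^bsub>M2\<^esub> m"
          using m minus1[OF h(1) h(3)] minus2[OF h(2) h(4)] neg2[of m] by auto
        then show "\<exists>m\<in>S \<inter> P2. a \<ominus>\<^bsub>M1'\<^esub> a' = m \<and> b \<ominus>\<^bsub>M2\<^esub> b' = \<ominus>\<^bsub>M2\<^esub> m" using m(1) by blast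
      qed (assumption)+
      also have "\<dots> \<longleftrightarrow> q \<in> rel"
        unfolding q rel_def using key by auto
      finally show "q \<in> pushout_rel M0 M1' M2 \<longleftrightarrow> q \<in> rel" .
    qed
    have rel: "pushout_rel M0 M1' M2 = rel" using relq by blast
    define cls where "cls a b = {(a', b'). a' \<in> S \<and> b' \<in> P2 \<and> a \<oplus> b = a' \<oplus> b'}" for a b
    have img: "rel `` {(a, b)} = cls a b" if "a \<in> S" "b \<in> P2" for a b
      unfolding rel_def cls_def using that by auto
    have pcar: "pushout_carrier M0 M1' M2 = (S \<times> P2) // rel"
      unfolding pushout_carrier_def rel cM1' cM2 ..
    have Q: "X \<in> pushout_carrier M0 M1' M2 \<longleftrightarrow> (\<exists>a\<in>S. \<exists>b\<in>P2. X = cls a b)" for X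
    proof
      assume "X \<in> pushout_carrier M0 M1' M2"
      then have "X \<in> (S \<times> P2) // rel" unfolding pcar .
      then obtain q where q: "X = rel `` {q}" "q \<in> S \<times> P2" by (rule quotientE)
      obtain a b where ab: "q = (a, b)" by (metis prod.exhaust)
      have a: "a \<in> S" and b: "b \<in> P2" using q(2) ab by auto
      have "X = cls a b" using q(1) ab img[OF a b] by simp
      then show "\<exists>a\<in>S. \<exists>b\<in>P2. X = cls a b" using a b by blast
    next
      assume "\<exists>a\<in>S. \<exists>b\<in>P2. X = cls a b"
      then obtain a b where ab: "a \<in> S" "b \<in> P2" "X = cls a b" by blast
      have "rel `` {(a, b)} \<in> (S \<times> P2) // rel" by (rule quotientI) (use ab in simp)
      then show "X \<in> pushout_carrier M0 M1' M2" unfolding pcar using img[OF ab(1) ab(2)] ab(3) by simp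
    qed
    have PM: "pushout_map N (cls a b) = a \<oplus> b" if a: "a \<in> S" and b: "b \<in> P2" for a b
    proof -
      have "(\<lambda>(a, b). a \<oplus> b) ` cls a b = {a \<oplus> b}"
      proof
        show "(\<lambda>(a, b). a \<oplus> b) ` cls a b \<subseteq> {a \<oplus> b}" unfolding cls_def by auto
        have "(a, b) \<in> cls a b" unfolding cls_def using a b by simp
        then show "{a \<oplus> b} \<subseteq> (\<lambda>(a, b). a \<oplus> b) ` cls a b" by force
      qed
      then show ?thesis unfolding pushout_map_def by simp
    qed
    define T where "T = {a \<oplus> b | a b. a \<in> S \<and> b \<in> P2}"
    have inj: "inj_on (pushout_map N) (pushout_carrier M0 M1' M2)"
    proof (rule inj_onI)
      fix X Y assume X: "X \<in> pushout_carrier M0 M1' M2" and Y: "Y \<in> pushout_carrier M0 M1' M2"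
        and e: "pushout_map N X = pushout_map N Y"
      obtain a b where ab: "a \<in> S" "b \<in> P2" "X = cls a b" using X Q by blast
      obtain c d where cd: "c \<in> S" "d \<in> P2" "Y = cls c d" using Y Q by blast
      have "a \<oplus> b = c \<oplus> d" using e PM[OF ab(1) ab(2)] PM[OF cd(1) cd(2)] ab(3) cd(3) by simp
      then show "X = Y" unfolding ab(3) cd(3) cls_def by simp
    qed
    have imgT: "pushout_map N ` pushout_carrier M0 M1' M2 = T"
    proof
      show "pushout_map N ` pushout_carrier M0 M1' M2 \<subseteq> T"
      proof
        fix z assume "z \<in> pushout_map N ` pushout_carrier M0 M1' M2"
        then obtain X where X: "X \<in> pushout_carrier M0 M1' M2" "z = pushout_map N X" by blast
        obtain a b where ab: "a \<in> S" "b \<in> P2" "X = cls a b" using X(1) Q by blast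
        show "z \<in> T" unfolding T_def using X(2) ab PM[OF ab(1) ab(2)] by blast
      qed
      show "T \<subseteq> pushout_map N ` pushout_carrier M0 M1' M2"
      proof
        fix z assume "z \<in> T"
        then obtain a b where ab: "a \<in> S" "b \<in> P2" "z = a \<oplus> b" unfolding T_def by blast
        have "cls a b \<in> pushout_carrier M0 M1' M2" using Q ab by blast
        moreover have "z = pushout_map N (cls a b)" using PM[OF ab(1) ab(2)] ab(3) by simp
        ultimately show "z \<in> pushout_map N ` pushout_carrier M0 M1' M2" by blast
      qed
    qed
    have TN: "T \<subseteq> carrier N" unfolding T_def using SN P2N by auto
    have subT: "submod R N T"
      unfolding submod_def
    proof (intro conjI ballI TN)
      show "\<zero> \<in> T" unfolding T_def using S0 z2 by force
      fix x assume "x \<in> T"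
      then obtain a b where ab: "a \<in> S" "b \<in> P2" "x = a \<oplus> b" unfolding T_def by blast
      have aN: "a \<in> carrier N" and bN: "b \<in> carrier N" using ab SN P2N by auto
      { fix y assume "y \<in> T"
        then obtain c d where cd: "c \<in> S" "d \<in> P2" "y = c \<oplus> d" unfolding T_def by blast
        have cN: "c \<in> carrier N" and dN: "d \<in> carrier N" using cd SN P2N by auto
        have "x \<oplus> y = (a \<oplus> c) \<oplus> (b \<oplus> d)" using ab(3) cd(3) aN bN cN dN by (simp add: a_ac)
        moreover have "a \<oplus> c \<in> S" "b \<oplus> d \<in> P2" using Sadd[OF ab(1) cd(1)] P2add[OF ab(2) cd(2)] .
        ultimately show "x \<oplus> y \<in> T" unfolding T_def by blast }
      have "\<ominus> x = \<ominus> a \<oplus> \<ominus> b" using ab(3) minus_add[OF aN bN] by simp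
      moreover have "\<ominus> a \<in> S" "\<ominus> b \<in> P2" using Sneg[OF ab(1)] P2neg[OF ab(2)] .
      ultimately show "\<ominus> x \<in> T" unfolding T_def by blast
      fix r assume r: "r \<in> carrier R"
      have "r \<odot> x = r \<odot> a \<oplus> r \<odot> b" using ab(3) sm_rdistr[OF r aN bN] by simp
      moreover have "r \<odot> a \<in> S" "r \<odot> b \<in> P2" using Ssm[OF r ab(1)] P2sm[OF r ab(2)] .
      ultimately show "r \<odot> x \<in> T" unfolding T_def by blast
    qed
    have purT: "\<exists>y. (\<forall>j<n. y j \<in> T) \<and> (\<forall>i<m. lf r y i n = c i)"
      if r: "\<forall>i<m. \<forall>j<n. r i j \<in> carrier R" and c: "\<forall>i<m. c i \<in> T"
        and x: "\<forall>j<n. x j \<in> carrier N" and e: "\<forall>i<m. lf r x i n = c i"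
      for m n :: nat and r c x
    proof -
      have "\<forall>i. \<exists>p. i < m \<longrightarrow> fst p \<in> S \<and> snd p \<in> P2 \<and> c i = fst p \<oplus> snd p"
      proof
        fix i
        show "\<exists>p. i < m \<longrightarrow> fst p \<in> S \<and> snd p \<in> P2 \<and> c i = fst p \<oplus> snd p"
        proof (cases "i < m")
          case True
          then obtain a b where "a \<in> S" "b \<in> P2" "c i = a \<oplus> b" using c unfolding T_def by blast
          then show ?thesis by (intro exI[of _ "(a, b)"]) simp
        qed simp
      qed
      then obtain f where f: "\<forall>i<m. fst (f i) \<in> S \<and> snd (f i) \<in> P2 \<and> c i = fst (f i) \<oplus> snd (f i)"
        by (metis choice)
      define a where "a i = fst (f i)" for i
      define b where "b i = snd (f i)" for i
      have aS: "\<forall>i<m. a i \<in> S" and bP: "\<forall>i<m. b i \<in> P2" and cab: "\<forall>i<m. c i = a i \<oplus> b i"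
        using f unfolding a_def b_def by auto
      have ri: "\<forall>j<n. r i j \<in> carrier R" if "i < m" for i using r that by blast
      have e2: "\<forall>i<m. lf r x i n \<ominus> a i \<in> P2"
      proof (intro allI impI)
        fix i assume i: "i < m"
        have "lf r x i n \<ominus> a i = (a i \<oplus> b i) \<ominus> a i" using e cab i by simp
        also have "\<dots> = b i" by (rule G5) (use aS bP i SN P2N in auto)
        finally show "lf r x i n \<ominus> a i \<in> P2" using bP i by simp
      qed
      obtain x' where x': "\<forall>j<n. x' j \<in> S" "\<forall>i<m. lf r x' i n \<ominus> a i \<in> P2"
        using cl2[OF r aS x e2] by blast
      have x'N: "\<forall>j<n. x' j \<in> carrier N" using x'(1) SN by blast
      define z where "z j = x j \<ominus> x' j" for j
      have zN: "\<forall>j<n. z j \<in> carrier N" unfolding z_def using x x'N by simp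
      have lz: "lf r z i n = lf r x i n \<ominus> lf r x' i n" if i: "i < m" for i
        unfolding z_def by (rule lf_minus[of n r i x x', OF ri[OF i] x x'N])
      have zP: "\<forall>i<m. lf r z i n \<in> P2"
      proof (intro allI impI)
        fix i assume i: "i < m"
        have uN: "lf r x' i n \<in> carrier N" using lf_closed[of n r i x', OF ri[OF i] x'N] .
        have aN: "a i \<in> carrier N" and bN: "b i \<in> carrier N" using aS bP i SN P2N by auto
        have "lf r z i n = (a i \<oplus> b i) \<ominus> lf r x' i n" using lz[OF i] e cab i by simp
        also have "\<dots> = b i \<ominus> (lf r x' i n \<ominus> a i)" by (rule G2[OF uN aN bN])
        finally show "lf r z i n \<in> P2" using P2min[OF _ ] bP x'(2) i by simp
      qed
      obtain y where y: "\<forall>j<n. y j \<in> P2" "\<forall>i<m. lf r y i n = lf r z i n"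
        using pure_use[OF ps2 r zP zN] by blast
      have yN: "\<forall>j<n. y j \<in> carrier N" using y(1) P2N by blast
      define w where "w j = x' j \<oplus> y j" for j
      have wT: "\<forall>j<n. w j \<in> T" unfolding w_def T_def using x'(1) y(1) by blast
      have "\<forall>i<m. lf r w i n = c i"
      proof (intro allI impI)
        fix i assume i: "i < m"
        have "lf r w i n = lf r x' i n \<oplus> lf r y i n" unfolding w_def by (rule lf_add[of n r i x' y, OF ri[OF i] x'N yN])
        also have "\<dots> = lf r x' i n \<oplus> (lf r x i n \<ominus> lf r x' i n)" using y(2) lz[OF i] i by simp
        also have "\<dots> = lf r x i n" by (rule G4) (use lf_closed[of n r i x', OF ri[OF i] x'N] lf_closed[of n r i x, OF ri[OF i] x] in auto)
        also have "\<dots> = c i" using e i by simp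
        finally show "lf r w i n = c i" .
      qed
      then show ?thesis using wT by blast
    qed
    have pT: "pure_submod R N T"
      unfolding pure_submod_def
    proof (intro conjI subT allI impI)
      fix m n :: nat and r c
      assume r: "\<forall>i<m. \<forall>j<n. r i j \<in> carrier R" and c: "\<forall>i<m. c i \<in> T"
        and "\<exists>x. (\<forall>j<n. x j \<in> carrier N) \<and> (\<forall>i<m. finsum N (\<lambda>j. r i j \<odot>\<^bsub>N\<^esub> x j) {..<n} = c i)"
      then obtain x where x: "\<forall>j<n. x j \<in> carrier N" "\<forall>i<m. lf r x i n = c i" unfolding lfe by blast
      show "\<exists>y. (\<forall>j<n. y j \<in> T) \<and> (\<forall>i<m. finsum N (\<lambda>j. r i j \<odot>\<^bsub>N\<^esub> y j) {..<n} = c i)"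
        unfolding lfe using purT[OF r c x(1) x(2)] .
    qed
    show ?thesis unfolding indep_def imgT using inj pT by blast
  qed
  show ?thesis using pa pb pc pd card ind by blast
qed

end

theorem theorem4p9:
  fixes R :: "('r, 'm) ring_scheme" and K :: "('r, 'a) module \<Rightarrow> bool"
    and M1 M2 N :: "('r, 'a) module"
  assumes "ring R"
    and "AEC_pure R K"
    and dsum: "\<And>(I::'a set) M D. (\<forall>i\<in>I. K (M i)) \<Longrightarrow> is_direct_sum R I M D \<Longrightarrow> K D"
    and pure_sub: "\<And>M N. K N \<Longrightarrow> pure_le R M N \<Longrightarrow> K M"
    and pure_epi: "\<And>M (M'::('r, 'a) module) f. K M \<Longrightarrow> pure_epi R M M' f \<Longrightarrow> K M'"
    and "K M1" "K M2" "K N"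
    and "pure_le R M1 N" "pure_le R M2 N"
  shows "\<exists>M1' M0. K M1' \<and> K M0 \<and> pure_le R M0 M1' \<and> pure_le R M1' N \<and>
           pure_le R M0 M2 \<and> pure_le R M1 M1' \<and>
           (card_of (carrier M0), card_of (carrier M1 <+> carrier R <+> (UNIV::nat set))) \<in> ordLeq \<and>
           indep R M0 M1' M2 N"
proof -
  have lN: "left_module R N" using \<open>pure_le R M1 N\<close> unfolding pure_le_def by blast
  obtain M1' M0 where H: "pure_le R M0 M1'" "pure_le R M1' N" "pure_le R M0 M2" "pure_le R M1 M1'"
    "(card_of (carrier M0), card_of (carrier M1 <+> carrier R <+> (UNIV::nat set))) \<in> ordLeq"
    "indep R M0 M1' M2 N"
    using lm.main[OF lm.intro[OF lN] \<open>pure_le R M1 N\<close> \<open>pure_le R M2 N\<close>] by blast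
  have "K M1'" by (rule pure_sub[OF \<open>K N\<close> H(2)])
  moreover have "K M0" by (rule pure_sub[OF \<open>K M2\<close> H(3)])
  ultimately show ?thesis using H by blast
qed

end
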